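(* Let $k\ge1$ be an integer, let $G=(V,E)$ be an undirected graph with edges partitioned into unsafe edges $\mathscr{U}$ and safe edges $\mathscr{S}$ and with nonnegative costs $\{c_e\}_{e\in E}$, let $r\in V$, and let $F\subseteq E$ be a feasible solution for $k$-FGC. Consider the digraph $D=(V,A)$ where, for each unsafe edge $e=uv\in F\cap\mathscr{U}$, $A$ contains one bidirected pair $\{(u,v),(v,u)\}$ arising from $e$, and for each safe edge $e=uv\in F\cap\mathscr{S}$, $A$ contains $k+1$ (distinct, parallel) bidirected pairs arising from $e$; each arc is given the cost of the edge it arises from. Then $D$ contains an $r$-out $(k+1)$-arborescence of cost at most $(k+1)c(F)$.
   Context: $F\subseteq E$ is feasible for $k$-FGC if for every $X\subseteq F\cap\mathscr{U}$ with $|X|\le k$, the subgraph $(V,F\setminus X)$ is connected; $c(F)=\sum_{e\in F}c_e$. An $r$-out arborescence $(V,T)$ in $D$ is a subgraph such that the undirected version of $T$ is acyclic and for every $v\in V\setminus\{r\}$ there is a directed $r\to v$ path in $(V,T)$. An $r$-out $(k+1)$-arborescence is a subgraph $(V,T)$ of $D$ whose arc set can be partitioned into $k+1$ arc-disjoint $r$-out arborescences; its cost is the sum of the costs of its arcs. *)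

theory Defs
  imports Complex_Main
begin

text \<open>Undirected multigraph: vertex set V, edge set E (abstract edge identifiers of type 'e),
  and an endpoint map ends :: 'e \<Rightarrow> 'v \<times> 'v.\<close>

definition ugraph :: "'v set \<Rightarrow> 'e set \<Rightarrow> ('e \<Rightarrow> 'v \<times> 'v) \<Rightarrow> bool" where
  "ugraph V E ends \<longleftrightarrow> finite V \<and> finite E \<and> (\<forall>e\<in>E. fst (ends e) \<in> V \<and> snd (ends e) \<in> V)"

definition adj :: "('e \<Rightarrow> 'v \<times> 'v) \<Rightarrow> 'e set \<Rightarrow> ('v \<times> 'v) set" where
  "adj ends H = {(x, y). \<exists>e\<in>H. ends e = (x, y) \<or> ends e = (y, x)}"

definition connected_sub :: "'v set \<Rightarrow> ('e \<Rightarrow> 'v \<times> 'v) \<Rightarrow> 'e set \<Rightarrow> bool" where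
  "connected_sub V ends H \<longleftrightarrow> (\<forall>u\<in>V. \<forall>v\<in>V. (u, v) \<in> (adj ends H)\<^sup>*)"

text \<open>Feasibility for k-FGC: U is the set of unsafe edges.\<close>
definition kFGC_feasible :: "nat \<Rightarrow> 'v set \<Rightarrow> 'e set \<Rightarrow> ('e \<Rightarrow> 'v \<times> 'v) \<Rightarrow> 'e set \<Rightarrow> 'e set \<Rightarrow> bool" where
  "kFGC_feasible k V E ends U F \<longleftrightarrow> F \<subseteq> E \<and>
     (\<forall>X. X \<subseteq> F \<inter> U \<longrightarrow> card X \<le> k \<longrightarrow> connected_sub V ends (F - X))"

definition cost :: "('e \<Rightarrow> real) \<Rightarrow> 'e set \<Rightarrow> real" where
  "cost c F = (\<Sum>e\<in>F. c e)"

text \<open>Arcs of the digraph D: an arc is (e, i, b) = the i-th copy of the bidirected pair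
  arising from edge e, oriented along ends e if b, against it otherwise.\<close>
type_synonym 'e arc = "'e \<times> nat \<times> bool"

definition arc_edge :: "'e arc \<Rightarrow> 'e" where
  "arc_edge a = fst a"

definition arc_tail :: "('e \<Rightarrow> 'v \<times> 'v) \<Rightarrow> 'e arc \<Rightarrow> 'v" where
  "arc_tail ends a = (if snd (snd a) then fst (ends (fst a)) else snd (ends (fst a)))"

definition arc_head :: "('e \<Rightarrow> 'v \<times> 'v) \<Rightarrow> 'e arc \<Rightarrow> 'v" where
  "arc_head ends a = (if snd (snd a) then snd (ends (fst a)) else fst (ends (fst a)))"

definition D_arcs :: "nat \<Rightarrow> 'e set \<Rightarrow> 'e set \<Rightarrow> 'e set \<Rightarrow> 'e arc set" where
  "D_arcs k U S F = {(e, i, b). (e \<in> F \<inter> U \<and> i = 0) \<or> (e \<in> F \<inter> S \<and> i \<le> k)}"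

definition arc_cost :: "('e \<Rightarrow> real) \<Rightarrow> 'e arc set \<Rightarrow> real" where
  "arc_cost c T = (\<Sum>a\<in>T. c (arc_edge a))"

definition undirected_cycle :: "('e \<Rightarrow> 'v \<times> 'v) \<Rightarrow> 'e arc set \<Rightarrow> 'e arc list \<Rightarrow> 'v list \<Rightarrow> bool" where
  "undirected_cycle ends T as vs \<longleftrightarrow>
     as \<noteq> [] \<and> set as \<subseteq> T \<and> distinct as \<and> length vs = length as + 1 \<and>
     (\<forall>i<length as. (arc_tail ends (as ! i) = vs ! i \<and> arc_head ends (as ! i) = vs ! Suc i) \<or>
                     (arc_head ends (as ! i) = vs ! i \<and> arc_tail ends (as ! i) = vs ! Suc i)) \<and>
     hd vs = last vs \<and> distinct (tl vs)"

definition undirected_acyclic :: "('e \<Rightarrow> 'v \<times> 'v) \<Rightarrow> 'e arc set \<Rightarrow> bool" where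
  "undirected_acyclic ends T \<longleftrightarrow> (\<nexists>as vs. undirected_cycle ends T as vs)"

definition dir_rel :: "('e \<Rightarrow> 'v \<times> 'v) \<Rightarrow> 'e arc set \<Rightarrow> ('v \<times> 'v) set" where
  "dir_rel ends T = {(arc_tail ends a, arc_head ends a) | a. a \<in> T}"

definition r_out_arborescence :: "'v set \<Rightarrow> ('e \<Rightarrow> 'v \<times> 'v) \<Rightarrow> 'e arc set \<Rightarrow> 'v \<Rightarrow> 'e arc set \<Rightarrow> bool" where
  "r_out_arborescence V ends A r T \<longleftrightarrow>
     T \<subseteq> A \<and> undirected_acyclic ends T \<and>
     (\<forall>v\<in>V - {r}. (r, v) \<in> (dir_rel ends T)\<^sup>*)"

definition r_out_multi_arborescence :: "nat \<Rightarrow> 'v set \<Rightarrow> ('e \<Rightarrow> 'v \<times> 'v) \<Rightarrow> 'e arc set \<Rightarrow> 'v \<Rightarrow> 'e arc set \<Rightarrow> bool" where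
  "r_out_multi_arborescence k V ends A r T \<longleftrightarrow>
     T \<subseteq> A \<and>
     (\<exists>Ts :: nat \<Rightarrow> 'e arc set.
        (\<forall>i\<le>k. r_out_arborescence V ends A r (Ts i)) \<and>
        (\<forall>i\<le>k. \<forall>j\<le>k. i \<noteq> j \<longrightarrow> Ts i \<inter> Ts j = {}) \<and>
        T = (\<Union>i\<le>k. Ts i))"

end

theory Submission
  imports Defs
begin

definition rho :: "('a \<Rightarrow> 'v) \<Rightarrow> ('a \<Rightarrow> 'v) \<Rightarrow> 'a set \<Rightarrow> 'v set \<Rightarrow> nat" where
  "rho tf hf B X = (\<Sum>a\<in>B. if tf a \<notin> X \<and> hf a \<in> X then 1 else 0)"

definition pc :: "nat \<Rightarrow> (nat \<Rightarrow> 'v set) \<Rightarrow> 'v set \<Rightarrow> nat" where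
  "pc n R X = (\<Sum>j<n. if X \<inter> R j = {} then 1 else 0)"

definition drel :: "('a \<Rightarrow> 'v) \<Rightarrow> ('a \<Rightarrow> 'v) \<Rightarrow> 'a set \<Rightarrow> ('v \<times> 'v) set" where
  "drel tf hf T = {(tf a, hf a) | a. a \<in> T}"

lemma rho_card: "finite B \<Longrightarrow> rho tf hf B X = card {a\<in>B. tf a \<notin> X \<and> hf a \<in> X}"
  unfolding rho_def by (simp add: sum.If_cases Int_def)

lemma rho_submod: "rho tf hf B (X \<union> Z) + rho tf hf B (X \<inter> Z) \<le> rho tf hf B X + rho tf hf B Z"
  unfolding rho_def sum.distrib[symmetric] by (rule sum_mono) auto

lemma rho_remove: "finite B \<Longrightarrow> a \<in> B \<Longrightarrow>
  rho tf hf B X = rho tf hf (B - {a}) X + (if tf a \<notin> X \<and> hf a \<in> X then 1 else 0)"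
  unfolding rho_def by (simp add: sum.remove add.commute)

lemma pc_supermod:
  assumes "i < n"
  shows "pc n R X + pc n R Z + (if X \<inter> Z \<inter> R i = {} \<and> X \<inter> R i \<noteq> {} \<and> Z \<inter> R i \<noteq> {} then 1 else 0)
     \<le> pc n R (X \<union> Z) + pc n R (X \<inter> Z)"
proof -
  let ?c = "(if X \<inter> Z \<inter> R i = {} \<and> X \<inter> R i \<noteq> {} \<and> Z \<inter> R i \<noteq> {} then 1 else 0) :: nat"
  have d: "(\<Sum>j<n. if j = i then ?c else 0) = ?c" using assms by (simp add: sum.delta)
  have "pc n R X + pc n R Z + ?c = (\<Sum>j<n. (if X \<inter> R j = {} then 1 else 0) + (if Z \<inter> R j = {} then 1 else 0) + (if j = i then ?c else 0))"
    unfolding pc_def sum.distrib d by simp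
  also have "\<dots> \<le> (\<Sum>j<n. (if (X \<union> Z) \<inter> R j = {} then 1 else 0) + (if (X \<inter> Z) \<inter> R j = {} then 1 else 0))"
    by (rule sum_mono) auto
  also have "\<dots> = pc n R (X \<union> Z) + pc n R (X \<inter> Z)" unfolding pc_def sum.distrib by simp
  finally show ?thesis .
qed

lemma pc_mono_sub:
  assumes "i < n" "Y \<subseteq> X" "X \<inter> R i \<noteq> {}" "Y \<inter> R i = {}"
  shows "pc n R X < pc n R Y"
  unfolding pc_def
  by (rule sum_strict_mono_ex1) (use assms in auto)

lemma pc_update:
  assumes "i < n"
  shows "pc n R X = pc n (R(i := insert v (R i))) X + (if X \<inter> R i = {} \<and> v \<in> X then 1 else 0)"
proof -
  let ?c = "(if X \<inter> R i = {} \<and> v \<in> X then 1 else 0) :: nat"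
  have d: "(\<Sum>j<n. if j = i then ?c else 0) = ?c" using assms by (simp add: sum.delta)
  have "pc n R X = (\<Sum>j<n. (if X \<inter> (R(i := insert v (R i))) j = {} then 1 else 0) + (if j = i then ?c else 0))"
    unfolding pc_def by (rule sum.cong) auto
  then show ?thesis unfolding sum.distrib d pc_def by simp
qed

lemma sum_pos_ex: "finite B \<Longrightarrow> 0 < (\<Sum>a\<in>B. if P a then 1 else 0::nat) \<Longrightarrow> \<exists>a\<in>B. P a"
proof (rule ccontr)
  assume "0 < (\<Sum>a\<in>B. if P a then 1 else 0::nat)" "\<not> (\<exists>a\<in>B. P a)"
  then have "(\<Sum>a\<in>B. if P a then 1 else 0::nat) = 0" by (intro sum.neutral) auto
  then show False using \<open>0 < _\<close> by simp
qed

lemma select_arc: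
  assumes finV: "finite V" and finA: "finite A" and ends: "\<forall>a\<in>A. tf a \<in> V \<and> hf a \<in> V"
    and rR: "r \<in> R i" and RV: "R i \<subseteq> V" and i: "i < n" and RneV: "R i \<noteq> V"
    and inv: "\<forall>X. X \<subseteq> V - {r} \<longrightarrow> X \<noteq> {} \<longrightarrow> pc n R X \<le> rho tf hf A' X"
    and A'A: "A' \<subseteq> A"
  shows "\<exists>a\<in>A'. tf a \<in> R i \<and> hf a \<notin> R i \<and>
     (\<forall>X. X \<subseteq> V - {r} \<longrightarrow> X \<noteq> {} \<longrightarrow> pc n (R(i := insert (hf a) (R i))) X \<le> rho tf hf (A' - {a}) X)"
proof -
  have finA': "finite A'" using finA A'A finite_subset by blast
  define C where "C = {X. X \<subseteq> V - {r} \<and> rho tf hf A' X = pc n R X \<and> X \<inter> R i \<noteq> {} \<and> X - R i \<noteq> {}}"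
  have key: "\<exists>a\<in>A'. tf a \<in> R i \<and> hf a \<notin> R i \<and> (\<forall>Z\<in>C. \<not>(tf a \<notin> Z \<and> hf a \<in> Z))"
  proof (cases "C = {}")
    case True
    define Y where "Y = V - R i"
    have Y1: "Y \<subseteq> V - {r}" "Y \<noteq> {}" using rR RV RneV unfolding Y_def by auto
    have "0 < pc n R Y" unfolding pc_def
      by (rule sum_pos2[where i=i]) (use i in \<open>auto simp: Y_def\<close>)
    moreover have "pc n R Y \<le> rho tf hf A' Y" using inv Y1 by blast
    ultimately have "0 < rho tf hf A' Y" by linarith
    then obtain a where a: "a \<in> A'" "tf a \<notin> Y \<and> hf a \<in> Y"
      using sum_pos_ex[OF finA', of "\<lambda>a. tf a \<notin> Y \<and> hf a \<in> Y"] unfolding rho_def by blast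
    then have "tf a \<in> R i" "hf a \<notin> R i" using ends A'A unfolding Y_def by auto
    then show ?thesis using a True by blast
  next
    case False
    then obtain X0 where "X0 \<in> C" by blast
    then obtain X where X: "X \<in> C" and Xmin: "\<forall>Z. Z \<in> C \<longrightarrow> card X \<le> card Z"
      using ex_has_least_nat[of "\<lambda>X. X \<in> C" X0 card] by blast
    have XV: "X \<subseteq> V - {r}" and Xt: "rho tf hf A' X = pc n R X" and XR: "X \<inter> R i \<noteq> {}"
      and XmR: "X - R i \<noteq> {}" using X unfolding C_def by auto
    define Y where "Y = X - R i"
    have "pc n R X < pc n R Y" by (rule pc_mono_sub[OF i]) (use XR in \<open>auto simp: Y_def\<close>)
    also have "\<dots> \<le> rho tf hf A' Y" by (rule inv[rule_format]) (use XV XmR in \<open>auto simp: Y_def\<close>)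
    also have "\<dots> \<le> rho tf hf A' X + (\<Sum>a\<in>A'. if tf a \<in> X \<inter> R i \<and> hf a \<in> Y then 1 else 0)"
      unfolding rho_def sum.distrib[symmetric] by (rule sum_mono) (auto simp: Y_def)
    finally have "0 < (\<Sum>a\<in>A'. if tf a \<in> X \<inter> R i \<and> hf a \<in> Y then 1 else 0::nat)" using Xt by simp
    then obtain a where a: "a \<in> A'" "tf a \<in> X \<inter> R i \<and> hf a \<in> Y"
      using sum_pos_ex[OF finA', of "\<lambda>a. tf a \<in> X \<inter> R i \<and> hf a \<in> Y"] by blast
    have "\<not>(tf a \<notin> Z \<and> hf a \<in> Z)" if Z: "Z \<in> C" for Z
    proof
      assume az: "tf a \<notin> Z \<and> hf a \<in> Z"
      have ZV: "Z \<subseteq> V - {r}" and Zt: "rho tf hf A' Z = pc n R Z" and ZR: "Z \<inter> R i \<noteq> {}"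
        using Z unfolding C_def by auto
      have ne: "X \<inter> Z \<noteq> {}" using a az unfolding Y_def by auto
      have u1: "pc n R (X \<union> Z) \<le> rho tf hf A' (X \<union> Z)" by (rule inv[rule_format]) (use XV ZV XR in auto)
      have u2: "pc n R (X \<inter> Z) \<le> rho tf hf A' (X \<inter> Z)" by (rule inv[rule_format]) (use XV ZV ne in auto)
      have sm: "rho tf hf A' (X \<union> Z) + rho tf hf A' (X \<inter> Z) \<le> rho tf hf A' X + rho tf hf A' Z"
        by (rule rho_submod)
      note sp = pc_supermod[OF i, of R X Z]
      have XZR: "X \<inter> Z \<inter> R i \<noteq> {}"
      proof
        assume "X \<inter> Z \<inter> R i = {}"
        then have "pc n R X + pc n R Z + 1 \<le> pc n R (X \<union> Z) + pc n R (X \<inter> Z)"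
          using sp XR ZR by simp
        then show False using u1 u2 sm Xt Zt by linarith
      qed
      have "rho tf hf A' (X \<inter> Z) = pc n R (X \<inter> Z)" using u1 u2 sm Xt Zt sp by linarith
      then have "X \<inter> Z \<in> C" using XV XZR a az unfolding C_def Y_def by auto
      then have "card X \<le> card (X \<inter> Z)" using Xmin by blast
      moreover have "card (X \<inter> Z) < card X"
      proof (rule psubset_card_mono)
        show "finite X" using XV finV finite_subset by blast
        show "X \<inter> Z \<subset> X" using a az by auto
      qed
      ultimately show False by linarith
    qed
    then show ?thesis using a unfolding Y_def by blast
  qed
  then obtain a where a: "a \<in> A'" "tf a \<in> R i" "hf a \<notin> R i" and aC: "\<forall>Z\<in>C. \<not>(tf a \<notin> Z \<and> hf a \<in> Z)"
    by blast
  have "pc n (R(i := insert (hf a) (R i))) X \<le> rho tf hf (A' - {a}) X"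
    if XV: "X \<subseteq> V - {r}" and Xne: "X \<noteq> {}" for X
  proof -
    have e1: "rho tf hf A' X = rho tf hf (A' - {a}) X + (if tf a \<notin> X \<and> hf a \<in> X then 1 else 0)"
      by (rule rho_remove[OF finA' a(1)])
    have e2: "pc n R X = pc n (R(i := insert (hf a) (R i))) X + (if X \<inter> R i = {} \<and> hf a \<in> X then 1 else 0)"
      by (rule pc_update[OF i])
    have iv: "pc n R X \<le> rho tf hf A' X" using inv XV Xne by blast
    show ?thesis
    proof (cases "tf a \<notin> X \<and> hf a \<in> X")
      case False
      then show ?thesis using e1 e2 iv by (auto split: if_splits)
    next
      case True
      show ?thesis
      proof (cases "X \<inter> R i = {}")
        case True
        then show ?thesis using e1 e2 iv \<open>tf a \<notin> X \<and> hf a \<in> X\<close> by simp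
      next
        case False
        then have "X \<notin> C" using aC \<open>tf a \<notin> X \<and> hf a \<in> X\<close> by blast
        then have "rho tf hf A' X \<noteq> pc n R X" using XV False \<open>tf a \<notin> X \<and> hf a \<in> X\<close> a(3)
          unfolding C_def by auto
        then show ?thesis using e1 e2 iv False \<open>tf a \<notin> X \<and> hf a \<in> X\<close> by (auto split: if_splits)
      qed
    qed
  qed
  then show ?thesis using a by blast
qed


definition good :: "'v set \<Rightarrow> 'a set \<Rightarrow> ('a \<Rightarrow> 'v) \<Rightarrow> ('a \<Rightarrow> 'v) \<Rightarrow> 'v \<Rightarrow> nat \<Rightarrow>
   (nat \<Rightarrow> 'v set) \<Rightarrow> (nat \<Rightarrow> 'a set) \<Rightarrow> (nat \<Rightarrow> 'v \<Rightarrow> nat) \<Rightarrow> bool" where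
  "good V A tf hf r n R T ord \<longleftrightarrow>
    (\<forall>j<n. r \<in> R j \<and> R j \<subseteq> V \<and> T j \<subseteq> A \<and>
       (\<forall>a\<in>T j. tf a \<in> R j \<and> hf a \<in> R j \<and> ord j (tf a) < ord j (hf a)) \<and>
       inj_on hf (T j) \<and> (\<forall>v\<in>R j. (r, v) \<in> (drel tf hf (T j))\<^sup>*)) \<and>
    (\<forall>j<n. \<forall>j'<n. j \<noteq> j' \<longrightarrow> T j \<inter> T j' = {}) \<and>
    (\<forall>X. X \<subseteq> V - {r} \<longrightarrow> X \<noteq> {} \<longrightarrow> pc n R X \<le> rho tf hf (A - (\<Union>j<n. T j)) X)"

lemma good_step:
  assumes finV: "finite V" and finA: "finite A" and ends: "\<forall>a\<in>A. tf a \<in> V \<and> hf a \<in> V"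
    and g: "good V A tf hf r n R T ord" and i: "i < n" and RneV: "R i \<noteq> V"
  shows "\<exists>R' T' ord'. good V A tf hf r n R' T' ord' \<and>
           (\<Sum>j<n. card (V - R' j)) < (\<Sum>j<n. card (V - R j))"
proof -
  define A' where "A' = A - (\<Union>j<n. T j)"
  have gi: "r \<in> R i" "R i \<subseteq> V" "T i \<subseteq> A"
    "\<forall>a\<in>T i. tf a \<in> R i \<and> hf a \<in> R i \<and> ord i (tf a) < ord i (hf a)"
    "inj_on hf (T i)" "\<forall>v\<in>R i. (r, v) \<in> (drel tf hf (T i))\<^sup>*"
    using g i unfolding good_def by auto
  have inv: "\<forall>X. X \<subseteq> V - {r} \<longrightarrow> X \<noteq> {} \<longrightarrow> pc n R X \<le> rho tf hf A' X"
    using g unfolding good_def A'_def by blast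
  obtain a where aA': "a \<in> A'" and u: "tf a \<in> R i" and v: "hf a \<notin> R i"
    and inv': "\<forall>X. X \<subseteq> V - {r} \<longrightarrow> X \<noteq> {} \<longrightarrow> pc n (R(i := insert (hf a) (R i))) X \<le> rho tf hf (A' - {a}) X"
    using select_arc[OF finV finA ends gi(1) gi(2) i RneV inv] unfolding A'_def by blast
  have aA: "a \<in> A" and aT: "\<forall>j<n. a \<notin> T j" using aA' unfolding A'_def by auto
  have vV: "hf a \<in> V" using aA ends by auto
  define R' where "R' = R(i := insert (hf a) (R i))"
  define T' where "T' = T(i := insert a (T i))"
  define m where "m = Suc (Max (ord i ` R i))"
  define ord' where "ord' = ord(i := (ord i)(hf a := m))"
  have finR: "finite (R i)" using gi(2) finV finite_subset by blast
  have um: "ord i (tf a) < m" unfolding m_def using finR u by (simp add: le_imp_less_Suc)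
  have ordR: "\<forall>w\<in>R i. ord' i w = ord i w" unfolding ord'_def using v by auto
  have U: "A - (\<Union>j<n. T' j) = A' - {a}"
  proof -
    have "(\<Union>j<n. T' j) = insert a (\<Union>j<n. T j)" unfolding T'_def using i by (auto split: if_splits)
    then show ?thesis unfolding A'_def by auto
  qed
  have treei: "r \<in> R' i \<and> R' i \<subseteq> V \<and> T' i \<subseteq> A \<and>
       (\<forall>b\<in>T' i. tf b \<in> R' i \<and> hf b \<in> R' i \<and> ord' i (tf b) < ord' i (hf b)) \<and>
       inj_on hf (T' i) \<and> (\<forall>w\<in>R' i. (r, w) \<in> (drel tf hf (T' i))\<^sup>*)"
  proof (intro conjI)
    show "r \<in> R' i" "R' i \<subseteq> V" "T' i \<subseteq> A" unfolding R'_def T'_def using gi vV aA by auto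
    show "\<forall>b\<in>T' i. tf b \<in> R' i \<and> hf b \<in> R' i \<and> ord' i (tf b) < ord' i (hf b)"
    proof
      fix b assume "b \<in> T' i"
      then consider "b = a" | "b \<in> T i" unfolding T'_def by auto
      then show "tf b \<in> R' i \<and> hf b \<in> R' i \<and> ord' i (tf b) < ord' i (hf b)"
      proof cases
        case 1
        then show ?thesis unfolding R'_def using u v um ordR by (auto simp: ord'_def)
      next
        case 2
        then show ?thesis unfolding R'_def using gi(4) ordR by auto
      qed
    qed
    show "inj_on hf (T' i)" unfolding T'_def using gi(4,5) v aT i by auto
    have sub: "drel tf hf (T i) \<subseteq> drel tf hf (T' i)" unfolding drel_def T'_def by auto
    have ua: "(tf a, hf a) \<in> drel tf hf (T' i)" unfolding drel_def T'_def by auto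
    show "\<forall>w\<in>R' i. (r, w) \<in> (drel tf hf (T' i))\<^sup>*"
    proof
      fix w assume "w \<in> R' i"
      then consider "w = hf a" | "w \<in> R i" unfolding R'_def by auto
      then show "(r, w) \<in> (drel tf hf (T' i))\<^sup>*"
      proof cases
        case 1
        have "(r, tf a) \<in> (drel tf hf (T' i))\<^sup>*" using gi(6) u rtrancl_mono[OF sub] by blast
        then show ?thesis using 1 ua by (meson rtrancl_into_rtrancl)
      next
        case 2
        then show ?thesis using gi(6) rtrancl_mono[OF sub] by blast
      qed
    qed
  qed
  have c1: "\<forall>j<n. r \<in> R' j \<and> R' j \<subseteq> V \<and> T' j \<subseteq> A \<and>
       (\<forall>b\<in>T' j. tf b \<in> R' j \<and> hf b \<in> R' j \<and> ord' j (tf b) < ord' j (hf b)) \<and>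
       inj_on hf (T' j) \<and> (\<forall>w\<in>R' j. (r, w) \<in> (drel tf hf (T' j))\<^sup>*)"
  proof (intro allI impI)
    fix j assume j: "j < n"
    show "r \<in> R' j \<and> R' j \<subseteq> V \<and> T' j \<subseteq> A \<and>
       (\<forall>b\<in>T' j. tf b \<in> R' j \<and> hf b \<in> R' j \<and> ord' j (tf b) < ord' j (hf b)) \<and>
       inj_on hf (T' j) \<and> (\<forall>w\<in>R' j. (r, w) \<in> (drel tf hf (T' j))\<^sup>*)"
    proof (cases "j = i")
      case True
      then show ?thesis using treei by simp
    next
      case False
      then show ?thesis using g j unfolding good_def R'_def T'_def ord'_def by simp
    qed
  qed
  have c2: "\<forall>j<n. \<forall>j'<n. j \<noteq> j' \<longrightarrow> T' j \<inter> T' j' = {}"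
    using g aT unfolding good_def T'_def by auto
  have c3: "\<forall>X. X \<subseteq> V - {r} \<longrightarrow> X \<noteq> {} \<longrightarrow> pc n R' X \<le> rho tf hf (A - (\<Union>j<n. T' j)) X"
    unfolding U R'_def using inv' by blast
  have good': "good V A tf hf r n R' T' ord'"
    unfolding good_def using c1 c2 c3 by blast
  have "(\<Sum>j<n. card (V - R' j)) < (\<Sum>j<n. card (V - R j))"
  proof (rule sum_strict_mono_ex1)
    show "finite {..<n}" by simp
    have fin: "finite (V - R i)" using finV by simp
    have e: "V - R' i = (V - R i) - {hf a}" unfolding R'_def by auto
    have "card (V - R' i) < card (V - R i)"
      unfolding e by (rule card_Diff1_less[OF fin]) (use vV v in auto)
    then show "\<exists>j\<in>{..<n}. card (V - R' j) < card (V - R j)" using i by blast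
    show "\<forall>j\<in>{..<n}. card (V - R' j) \<le> card (V - R j)"
      unfolding R'_def using finV by (auto intro!: card_mono)
  qed
  then show ?thesis using good' by blast
qed


lemma edmonds:
  assumes finV: "finite V" and finA: "finite A" and ends: "\<forall>a\<in>A. tf a \<in> V \<and> hf a \<in> V"
    and rV: "r \<in> V"
    and cut: "\<forall>X. X \<subseteq> V - {r} \<longrightarrow> X \<noteq> {} \<longrightarrow> n \<le> rho tf hf A X"
  shows "\<exists>T (ord :: nat \<Rightarrow> 'v \<Rightarrow> nat). (\<forall>j<n. T j \<subseteq> A \<and> (\<forall>a\<in>T j. ord j (tf a) < ord j (hf a)) \<and> inj_on hf (T j) \<and>
              (\<forall>v\<in>V. (r, v) \<in> (drel tf hf (T j))\<^sup>*)) \<and>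
           (\<forall>j<n. \<forall>j'<n. j \<noteq> j' \<longrightarrow> T j \<inter> T j' = {})"
proof -
  have main: "\<forall>R T ord. good V A tf hf r n R T ord \<longrightarrow> (\<Sum>j<n. card (V - R j)) = m \<longrightarrow>
      (\<exists>R T ord. good V A tf hf r n R T ord \<and> (\<forall>j<n. R j = V))" for m
  proof (induction m rule: less_induct)
    case (less m)
    show ?case
    proof (intro allI impI)
      fix R T ord assume g: "good V A tf hf r n R T ord" and m: "(\<Sum>j<n. card (V - R j)) = m"
      show "\<exists>R T ord. good V A tf hf r n R T ord \<and> (\<forall>j<n. R j = V)"
      proof (cases "\<forall>j<n. R j = V")
        case True
        then show ?thesis using g by blast
      next
        case False
        then obtain i where "i < n" "R i \<noteq> V" by blast
        from good_step[OF finV finA ends g this] obtain R' T' ord' where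
          "good V A tf hf r n R' T' ord'" "(\<Sum>j<n. card (V - R' j)) < (\<Sum>j<n. card (V - R j))"
          by blast
        then show ?thesis using less.IH[rule_format, OF _ _ refl] m by blast
      qed
    qed
  qed
  have g0: "good V A tf hf r n (\<lambda>_. {r}) (\<lambda>_. {}) (\<lambda>_ _. 0)"
    unfolding good_def
  proof (intro conjI)
    show "\<forall>X. X \<subseteq> V - {r} \<longrightarrow> X \<noteq> {} \<longrightarrow> pc n (\<lambda>_. {r}) X \<le> rho tf hf (A - (\<Union>j<n. {})) X"
    proof (intro allI impI)
      fix X assume X: "X \<subseteq> V - {r}" "X \<noteq> {}"
      have "pc n (\<lambda>_. {r}) X = n" unfolding pc_def using X by auto
      then show "pc n (\<lambda>_. {r}) X \<le> rho tf hf (A - (\<Union>j<n. {})) X" using cut X by simp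
    qed
  qed (use rV in auto)
  obtain R T ord where g: "good V A tf hf r n R T ord" and RV: "\<forall>j<n. R j = V"
    using main[rule_format, OF g0 refl] by blast
  have "(\<forall>j<n. T j \<subseteq> A \<and> (\<forall>a\<in>T j. ord j (tf a) < ord j (hf a)) \<and> inj_on hf (T j) \<and>
              (\<forall>v\<in>V. (r, v) \<in> (drel tf hf (T j))\<^sup>*)) \<and>
           (\<forall>j<n. \<forall>j'<n. j \<noteq> j' \<longrightarrow> T j \<inter> T j' = {})"
  proof (rule conjI; intro allI impI)
    fix j assume j: "j < n"
    have gj: "T j \<subseteq> A \<and> (\<forall>a\<in>T j. tf a \<in> R j \<and> hf a \<in> R j \<and> ord j (tf a) < ord j (hf a)) \<and>
       inj_on hf (T j) \<and> (\<forall>v\<in>R j. (r, v) \<in> (drel tf hf (T j))\<^sup>*)"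
      using conjunct1[OF g[unfolded good_def], rule_format, OF j] by simp
    have "R j = V" using RV j by blast
    then show "T j \<subseteq> A \<and> (\<forall>a\<in>T j. ord j (tf a) < ord j (hf a)) \<and> inj_on hf (T j) \<and>
              (\<forall>v\<in>V. (r, v) \<in> (drel tf hf (T j))\<^sup>*)" using gj by simp
  next
    fix j j' assume "j < n" "j' < n" "j \<noteq> j'"
    then show "T j \<inter> T j' = {}" using conjunct1[OF conjunct2[OF g[unfolded good_def]]] by blast
  qed
  then show ?thesis by (rule exI[where x=T, OF exI[where x=ord]])
qed


lemma acyclic_from_ord:
  assumes inj: "inj_on (arc_head ends) T"
    and ordT: "\<forall>a\<in>T. ord (arc_tail ends a) < (ord (arc_head ends a) :: nat)"
  shows "undirected_acyclic ends T"
  unfolding undirected_acyclic_def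
proof (intro notI, elim exE)
  fix as vs assume cyc: "undirected_cycle ends T as vs"
  let ?t = "arc_tail ends" and ?h = "arc_head ends"
  define m where "m = length as"
  have ne: "as \<noteq> []" and sub: "set as \<subseteq> T" and dist: "distinct as" and lv: "length vs = m + 1"
    and join: "\<forall>i<m. (?t (as ! i) = vs ! i \<and> ?h (as ! i) = vs ! Suc i) \<or>
                     (?h (as ! i) = vs ! i \<and> ?t (as ! i) = vs ! Suc i)"
    and hl: "hd vs = last vs"
    using cyc unfolding undirected_cycle_def m_def by auto
  have m1: "m \<ge> 1" using ne unfolding m_def by (cases as) auto
  have v0: "vs ! 0 = vs ! m"
  proof -
    have "vs \<noteq> []" using lv by auto
    then show ?thesis using hl lv by (simp add: hd_conv_nth last_conv_nth)
  qed
  have H: "?h a = x" if "a \<in> T" "(?t a = x \<and> ?h a = y) \<or> (?t a = y \<and> ?h a = x)" "ord y \<le> ord x" for a x y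
    using that(2,3) ordT[rule_format, OF that(1)] by auto
  define f where "f i = ord (vs ! i)" for i
  have finI: "finite (f ` {1..m})" and neI: "f ` {1..m} \<noteq> {}" using m1 by auto
  obtain j where j: "j \<in> {1..m}" "f j = Max (f ` {1..m})"
    using Max_in[OF finI neI] by auto
  have jmax: "f i \<le> f j" if "i \<le> m" for i
  proof (cases "i = 0")
    case True
    have "f m \<le> f j" using j Max_ge[OF finI] m1 by auto
    then show ?thesis using True v0 unfolding f_def by simp
  next
    case False
    then show ?thesis using j Max_ge[OF finI] that by auto
  qed
  have inT: "as ! i \<in> T" if "i < m" for i using sub that unfolding m_def by auto
  show False
  proof (cases "m = 1")
    case True
    have "vs ! 1 = vs ! 0" using v0 True by simp
    then have "?t (as ! 0) = ?h (as ! 0)" using join[rule_format, of 0] True by auto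
    moreover have "ord (?t (as ! 0)) < ord (?h (as ! 0))" using ordT inT[of 0] True by simp
    ultimately show False by simp
  next
    case False
    then have m2: "m \<ge> 2" using m1 by auto
    have a1: "?h (as ! (j - 1)) = vs ! j"
    proof (rule H)
      show "as ! (j - 1) \<in> T" using inT j by auto
      have "Suc (j - 1) = j" using j by auto
      then show "(?t (as ! (j - 1)) = vs ! j \<and> ?h (as ! (j - 1)) = vs ! (j - 1)) \<or>
                 (?t (as ! (j - 1)) = vs ! (j - 1) \<and> ?h (as ! (j - 1)) = vs ! j)"
        using join[rule_format, of "j - 1"] j by auto
      show "ord (vs ! (j - 1)) \<le> ord (vs ! j)" using jmax[of "j - 1"] j unfolding f_def by auto
    qed
    define j2 where "j2 = (if j < m then j else 0)"
    have j2m: "j2 < m" using m2 unfolding j2_def by auto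
    have a2: "?h (as ! j2) = vs ! j"
    proof (rule H)
      show "as ! j2 \<in> T" using inT j2m by auto
      have e0: "vs ! j2 = vs ! j" using v0 j unfolding j2_def by auto
      have e1: "Suc j2 \<le> m" using j2m by auto
      show "(?t (as ! j2) = vs ! j \<and> ?h (as ! j2) = vs ! Suc j2) \<or>
            (?t (as ! j2) = vs ! Suc j2 \<and> ?h (as ! j2) = vs ! j)"
        using join[rule_format, OF j2m] e0 by auto
      show "ord (vs ! Suc j2) \<le> ord (vs ! j)" using jmax[OF e1] unfolding f_def by auto
    qed
    have neq: "as ! (j - 1) \<noteq> as ! j2"
    proof
      assume "as ! (j - 1) = as ! j2"
      moreover have "j - 1 < length as" "j2 < length as" using j j2m unfolding m_def by auto
      ultimately have "j - 1 = j2" using nth_eq_iff_index_eq[OF dist] by blast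
      then show False using j m2 unfolding j2_def by (auto split: if_splits)
    qed
    have jm: "j - 1 < m" using j by auto
    have "as ! (j - 1) = as ! j2"
      by (rule inj_onD[OF inj]) (use a1 a2 inT[OF jm] inT[OF j2m] in auto)
    then show False using neq by simp
  qed
qed


lemma cross_lemma:
  assumes "(u, w) \<in> (adj ends H)\<^sup>*" "u \<notin> X" "w \<in> X"
  shows "\<exists>e\<in>H. (fst (ends e) \<in> X) \<noteq> (snd (ends e) \<in> X)"
  using assms
proof (induction arbitrary: rule: rtrancl_induct)
  case base
  then show ?case by simp
next
  case (step y z)
  show ?case
  proof (cases "y \<in> X")
    case True
    then show ?thesis using step by blast
  next
    case False
    from step(2) obtain e where "e \<in> H" "ends e = (y, z) \<or> ends e = (z, y)" unfolding adj_def by auto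
    then show ?thesis using False step(5) by (metis fst_conv snd_conv)
  qed
qed

lemma finite_D: "finite F \<Longrightarrow> finite (D_arcs k U S F)"
proof -
  assume "finite F"
  then have "finite (F \<times> {0..k} \<times> (UNIV :: bool set))" by simp
  moreover have "D_arcs k U S F \<subseteq> F \<times> {0..k} \<times> (UNIV :: bool set)" unfolding D_arcs_def by auto
  ultimately show ?thesis using finite_subset by blast
qed

lemma cut_bound:
  assumes ug: "ugraph V E ends" and US: "U \<union> S = E"
    and feas: "kFGC_feasible k V E ends U F" and rV: "r \<in> V"
    and XV: "X \<subseteq> V - {r}" and Xne: "X \<noteq> {}"
  shows "k + 1 \<le> rho (arc_tail ends) (arc_head ends) (D_arcs k U S F) X"
proof -
  have FE: "F \<subseteq> E" using feas unfolding kFGC_feasible_def by auto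
  have finF: "finite F" using FE ug unfolding ugraph_def using finite_subset by blast
  let ?D = "D_arcs k U S F"
  let ?In = "{a\<in>?D. arc_tail ends a \<notin> X \<and> arc_head ends a \<in> X}"
  have finIn: "finite ?In" using finite_D[OF finF] by simp
  have rc: "rho (arc_tail ends) (arc_head ends) ?D X = card ?In" by (rule rho_card[OF finite_D[OF finF]])
  define Cr where "Cr = {e\<in>F. (fst (ends e) \<in> X) \<noteq> (snd (ends e) \<in> X)}"
  define g where "g e i = (e, i, snd (ends e) \<in> X)" for e and i :: nat
  have genter: "arc_tail ends (g e i) \<notin> X \<and> arc_head ends (g e i) \<in> X" if "e \<in> Cr" for e i
    using that unfolding Cr_def g_def arc_tail_def arc_head_def by auto
  show ?thesis
  proof (cases "\<exists>e\<in>Cr. e \<in> S")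
    case True
    then obtain e where e: "e \<in> Cr" "e \<in> S" by blast
    have sub: "g e ` {0..k} \<subseteq> ?In"
      using e genter unfolding D_arcs_def Cr_def g_def by auto
    have "inj_on (g e) {0..k}" unfolding inj_on_def g_def by auto
    then have "card (g e ` {0..k}) = k + 1" by (simp add: card_image)
    then show ?thesis using card_mono[OF finIn sub] rc by simp
  next
    case False
    then have CrU: "Cr \<subseteq> F \<inter> U" using FE US unfolding Cr_def by auto
    have finCr: "finite Cr" using finF unfolding Cr_def by simp
    have cardCr: "k + 1 \<le> card Cr"
    proof (rule ccontr)
      assume "\<not> k + 1 \<le> card Cr"
      then have "card Cr \<le> k" by simp
      then have conn: "connected_sub V ends (F - Cr)" using feas CrU unfolding kFGC_feasible_def by blast
      obtain x where x: "x \<in> X" using Xne by blast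
      then have "x \<in> V" "r \<notin> X" using XV by auto
      then have "(r, x) \<in> (adj ends (F - Cr))\<^sup>*" using conn rV unfolding connected_sub_def by blast
      then obtain e where "e \<in> F - Cr" "(fst (ends e) \<in> X) \<noteq> (snd (ends e) \<in> X)"
        using cross_lemma[OF _ \<open>r \<notin> X\<close> x] by blast
      then show False unfolding Cr_def by auto
    qed
    have sub: "(\<lambda>e. g e 0) ` Cr \<subseteq> ?In"
      using genter CrU unfolding D_arcs_def Cr_def g_def by auto
    have "inj_on (\<lambda>e. g e 0) Cr" unfolding inj_on_def g_def by auto
    then have "card ((\<lambda>e. g e 0) ` Cr) = card Cr" by (simp add: card_image)
    then show ?thesis using card_mono[OF finIn sub] rc cardCr by simp
  qed
qed


lemma arc_edge_inj:
  assumes inj: "inj_on (arc_head ends) T"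
    and ordT: "\<forall>a\<in>T. ord (arc_tail ends a) < (ord (arc_head ends a) :: nat)"
  shows "inj_on arc_edge T"
proof (rule inj_onI)
  fix a a' assume a: "a \<in> T" "a' \<in> T" "arc_edge a = arc_edge a'"
  obtain e i b where ad: "a = (e, i, b)" by (cases a) auto
  obtain e' i' b' where ad': "a' = (e', i', b')" by (cases a') auto
  have ee: "e' = e" using a(3) ad ad' unfolding arc_edge_def by simp
  show "a = a'"
  proof (cases "b = b'")
    case True
    then have "arc_head ends a = arc_head ends a'" using ad ad' ee unfolding arc_head_def by simp
    then show ?thesis using inj_onD[OF inj _ a(1,2)] by simp
  next
    case False
    then have "arc_head ends a = arc_tail ends a'" "arc_tail ends a = arc_head ends a'"
      using ad ad' ee unfolding arc_head_def arc_tail_def by auto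
    moreover have "ord (arc_tail ends a) < ord (arc_head ends a)" using ordT a(1) by blast
    moreover have "ord (arc_tail ends a') < ord (arc_head ends a')" using ordT a(2) by blast
    ultimately show ?thesis by simp
  qed
qed

theorem lemma1:
  fixes k :: nat and V :: "'v set" and E :: "'e set" and ends :: "'e \<Rightarrow> 'v \<times> 'v"
    and U S F :: "'e set" and c :: "'e \<Rightarrow> real" and r :: 'v
  assumes "k \<ge> 1"
    and "ugraph V E ends"
    and "U \<union> S = E" and "U \<inter> S = {}"
    and "\<forall>e\<in>E. c e \<ge> 0"
    and "r \<in> V"
    and "kFGC_feasible k V E ends U F"
  shows "\<exists>T. r_out_multi_arborescence k V ends (D_arcs k U S F) r T \<and>
             arc_cost c T \<le> real (k + 1) * cost c F"
proof -
  note ug = assms(2) and US = assms(3) and cpos = assms(5) and rV = assms(6) and feas = assms(7)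
  have FE: "F \<subseteq> E" using feas unfolding kFGC_feasible_def by auto
  have finF: "finite F" using FE ug unfolding ugraph_def using finite_subset by blast
  have finV: "finite V" using ug unfolding ugraph_def by auto
  let ?D = "D_arcs k U S F"
  have finD: "finite ?D" by (rule finite_D[OF finF])
  have endsD: "\<forall>a\<in>?D. arc_tail ends a \<in> V \<and> arc_head ends a \<in> V"
  proof
    fix a assume "a \<in> ?D"
    then have "fst a \<in> E" using FE unfolding D_arcs_def by auto
    then show "arc_tail ends a \<in> V \<and> arc_head ends a \<in> V"
      using ug unfolding ugraph_def arc_tail_def arc_head_def by auto
  qed
  have cut: "\<forall>X. X \<subseteq> V - {r} \<longrightarrow> X \<noteq> {} \<longrightarrow> k + 1 \<le> rho (arc_tail ends) (arc_head ends) ?D X"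
    using cut_bound[OF ug US feas rV] by blast
  obtain T and ord :: "nat \<Rightarrow> 'v \<Rightarrow> nat" where
    T: "\<forall>j<k+1. T j \<subseteq> ?D \<and> (\<forall>a\<in>T j. ord j (arc_tail ends a) < ord j (arc_head ends a)) \<and>
          inj_on (arc_head ends) (T j) \<and> (\<forall>v\<in>V. (r, v) \<in> (drel (arc_tail ends) (arc_head ends) (T j))\<^sup>*)"
    and disj: "\<forall>j<k+1. \<forall>j'<k+1. j \<noteq> j' \<longrightarrow> T j \<inter> T j' = {}"
    using edmonds[OF finV finD endsD rV cut] by blast
  define Tall where "Tall = (\<Union>i\<le>k. T i)"
  have arb: "r_out_arborescence V ends ?D r (T i)" if i: "i \<le> k" for i
  proof -
    have Ti: "T i \<subseteq> ?D" "\<forall>a\<in>T i. ord i (arc_tail ends a) < ord i (arc_head ends a)"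
      "inj_on (arc_head ends) (T i)" "\<forall>v\<in>V. (r, v) \<in> (drel (arc_tail ends) (arc_head ends) (T i))\<^sup>*"
      using T i by auto
    have dr: "dir_rel ends (T i) = drel (arc_tail ends) (arc_head ends) (T i)"
      unfolding dir_rel_def drel_def by simp
    show ?thesis unfolding r_out_arborescence_def dr
      using Ti acyclic_from_ord[OF Ti(3) Ti(2)] by blast
  qed
  have multi: "r_out_multi_arborescence k V ends ?D r Tall"
    unfolding r_out_multi_arborescence_def
  proof (intro conjI exI[where x=T])
    show "Tall \<subseteq> ?D" unfolding Tall_def using arb unfolding r_out_arborescence_def by blast
    show "\<forall>i\<le>k. r_out_arborescence V ends ?D r (T i)" using arb by blast
    show "\<forall>i\<le>k. \<forall>j\<le>k. i \<noteq> j \<longrightarrow> T i \<inter> T j = {}" using disj by auto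
    show "Tall = (\<Union>i\<le>k. T i)" by (rule Tall_def)
  qed
  have each: "arc_cost c (T i) \<le> cost c F" if i: "i \<le> k" for i
  proof -
    have Ti: "T i \<subseteq> ?D" "\<forall>a\<in>T i. ord i (arc_tail ends a) < ord i (arc_head ends a)"
      "inj_on (arc_head ends) (T i)"
      using T i by auto
    have inj: "inj_on arc_edge (T i)" by (rule arc_edge_inj[OF Ti(3) Ti(2)])
    have sub: "arc_edge ` T i \<subseteq> F" using Ti(1) unfolding D_arcs_def arc_edge_def by auto
    have "arc_cost c (T i) = (\<Sum>e\<in>arc_edge ` T i. c e)"
      unfolding arc_cost_def by (simp add: sum.reindex[OF inj])
    also have "\<dots> \<le> (\<Sum>e\<in>F. c e)"
      by (rule sum_mono2[OF finF sub]) (use cpos FE in auto)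
    finally show ?thesis unfolding cost_def .
  qed
  have "arc_cost c Tall = (\<Sum>i\<le>k. arc_cost c (T i))"
    unfolding Tall_def arc_cost_def
  proof (rule sum.UNION_disjoint)
    show "finite {..k}" by simp
    show "\<forall>i\<in>{..k}. finite (T i)" using arb finD finite_subset unfolding r_out_arborescence_def by blast
    show "\<forall>i\<in>{..k}. \<forall>j\<in>{..k}. i \<noteq> j \<longrightarrow> T i \<inter> T j = {}" using disj by auto
  qed
  also have "\<dots> \<le> of_nat (card {..k}) * cost c F"
    by (rule sum_bounded_above) (use each in auto)
  also have "\<dots> = real (k + 1) * cost c F" by simp
  finally show ?thesis using multi by blast
qed

end
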